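(* Let $n\ge1$ and let $\varphi\colon A\to B$ be a Frobenius $n$-homomorphism. Then for every $a\in A$, $$\psi_n(a)=1+\psi_1(a-1)+\psi_2(a-1)+\dots+\psi_n(a-1),$$ i.e. $\psi_n(a)=\mathrm{ber}_\varphi(a)$.
   Context: $\mathbb{K}=\mathbb{R}$ or $\mathbb{C}$; $A$ and $B$ are commutative associative unital $\mathbb{K}$-algebras. For a $\mathbb{K}$-linear map $\varphi\colon A\to B$ and $a\in A$, the characteristic function is $R_\varphi(a,z)=\exp\bigl(\varphi(\ln(1+az))\bigr)=1+\sum_{k\ge1}\psi_k(a)z^k\in B[[z]]$, with $\ln(1+az)=\sum_{k\ge1}(-1)^{k+1}a^kz^k/k$ and $\varphi$ applied coefficientwise (so $\psi_1=\varphi$). The Frobenius maps $\Phi_k\colon A^k\to B$ of $\varphi$ are defined by $\Phi_1=\varphi$ and $\Phi_{k+1}(a_1,\dots,a_{k+1})=\varphi(a_1)\Phi_k(a_2,\dots,a_{k+1})-\sum_{j=2}^{k+1}\Phi_k(a_2,\dots,a_{j-1},a_1a_j,a_{j+1},\dots,a_{k+1})$. A linear map $\varphi$ is a (Frobenius) $n$-homomorphism if $\varphi(1)=n\cdot1_B$ and $\Phi_k\equiv0$ for all $k\ge n+1$. For such $\varphi$ the $\varphi$-Berezinian is $\mathrm{ber}_\varphi(a)=1+\sum_{k=1}^n\psi_k(a-1)$. *)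

theory Defs
  imports Complex_Main "HOL-Computational_Algebra.Formal_Power_Series"
begin

text \<open>Scalars: K = R (a C-algebra / C-linear map is in particular an R-algebra / R-linear map,
  and none of the notions below depend on the choice of K).\<close>

text \<open>The formal power series phi(ln(1 + a z)) in B[[z]], coefficientwise.\<close>
definition log_series :: "('a::{real_algebra_1,comm_ring_1} \<Rightarrow> 'b::{real_algebra_1,comm_ring_1}) \<Rightarrow> 'a \<Rightarrow> 'b fps" where
  "log_series \<phi> a = Abs_fps (\<lambda>k. if k = 0 then 0
      else \<phi> (((-1) ^ (k + 1) / real k) *\<^sub>R a ^ k))"

text \<open>psi_k(a) = k-th coefficient of exp(phi(ln(1+az))) = sum_m L^m / m!; since L has zero
  constant term only m \<le> k contribute to the k-th coefficient.\<close>
definition psi :: "('a::{real_algebra_1,comm_ring_1} \<Rightarrow> 'b::{real_algebra_1,comm_ring_1}) \<Rightarrow> 'a \<Rightarrow> nat \<Rightarrow> 'b" where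
  "psi \<phi> a k = (\<Sum>m\<le>k. (inverse (fact m)) *\<^sub>R (fps_nth ((log_series \<phi> a) ^ m) k))"

text \<open>Frobenius maps Phi_k(a_1,...,a_k), arguments given as a list of length k
  (Phi_0 = 1, so that Phi_1 = phi).\<close>
fun Frob :: "('a::comm_ring_1 \<Rightarrow> 'b::comm_ring_1) \<Rightarrow> 'a list \<Rightarrow> 'b" where
  "Frob \<phi> [] = 1"
| "Frob \<phi> (a # as) = \<phi> a * Frob \<phi> as
     - (\<Sum>j<length as. Frob \<phi> (as[j := a * as ! j]))"

definition frobenius_hom :: "nat \<Rightarrow> ('a::{real_algebra_1,comm_ring_1} \<Rightarrow> 'b::{real_algebra_1,comm_ring_1}) \<Rightarrow> bool" where
  "frobenius_hom n \<phi> \<longleftrightarrow> linear \<phi> \<and> \<phi> 1 = of_nat n \<and>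
     (\<forall>as. length as \<ge> n + 1 \<longrightarrow> Frob \<phi> as = 0)"

end

theory Submission
  imports Defs
begin


lemma Frob_swap0:
  fixes \<phi> :: "'a::comm_ring_1 \<Rightarrow> 'b::comm_ring_1"
  shows "Frob \<phi> (u # v # ys) = Frob \<phi> (v # u # ys)"
proof -
  define D where "D u v = (\<Sum>j<length ys. \<Sum>i<length ys.
      Frob \<phi> ((ys[j := u * ys!j])[i := v * (ys[j := u * ys!j]) ! i]))" for u v
  have Dsym: "D u v = D v u"
  proof -
    have "D u v = (\<Sum>i<length ys. \<Sum>j<length ys.
      Frob \<phi> ((ys[j := u * ys!j])[i := v * (ys[j := u * ys!j]) ! i]))"
      unfolding D_def by (rule sum.swap)
    also have "\<dots> = D v u" unfolding D_def
      by (intro sum.cong refl) (case_tac "x = xa", auto simp: list_update_swap mult.left_commute nth_list_update)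
    finally show ?thesis .
  qed
  have e: "Frob \<phi> (u # v # ys) = \<phi> u * (\<phi> v * Frob \<phi> ys - (\<Sum>i<length ys. Frob \<phi> (ys[i := v * ys!i])))
     - Frob \<phi> ((u*v) # ys)
     - (\<phi> v * (\<Sum>j<length ys. Frob \<phi> (ys[j := u * ys!j])) - D u v)" for u v
  proof -
    have s1: "(\<Sum>j<length (v # ys). Frob \<phi> ((v # ys)[j := u * (v # ys) ! j]))
       = Frob \<phi> ((u*v) # ys) + (\<Sum>j<length ys. Frob \<phi> (v # ys[j := u * ys ! j]))"
      by (simp only: length_Cons sum.lessThan_Suc_shift) simp
    have s2: "Frob \<phi> (v # ys[j := u * ys ! j]) = \<phi> v * Frob \<phi> (ys[j := u * ys ! j])
       - (\<Sum>i<length ys. Frob \<phi> ((ys[j := u * ys!j])[i := v * (ys[j := u * ys!j]) ! i]))" for j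
      by simp
    have s3: "Frob \<phi> (v # ys) = \<phi> v * Frob \<phi> ys - (\<Sum>i<length ys. Frob \<phi> (ys[i := v * ys!i]))"
      by simp
    show ?thesis
      apply (subst Frob.simps(2))
      unfolding s1 s2 s3 D_def
      by (simp add: sum_subtractf sum_distrib_left)
  qed
  show ?thesis unfolding e[of u v] e[of v u] Dsym by (simp add: algebra_simps)
qed

lemma Frob_swap:
  fixes \<phi> :: "'a::comm_ring_1 \<Rightarrow> 'b::comm_ring_1"
  shows "Frob \<phi> (xs @ u # v # ys) = Frob \<phi> (xs @ v # u # ys)"
proof (induction "length xs" arbitrary: xs u v ys)
  case 0
  then show ?case using Frob_swap0 by simp
next
  case (Suc k)
  then obtain a xs0 where xs: "xs = a # xs0" and k: "length xs0 = k"
    by (cases xs) auto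
  define L where "L = xs0 @ u # v # ys"
  define R where "R = xs0 @ v # u # ys"
  define \<tau> where "\<tau> j = (if j = k then Suc k else if j = Suc k then k else j)" for j
  have lenR: "length R = length L" by (simp add: L_def R_def)
  have IH: "Frob \<phi> (zs @ u' # v' # ws) = Frob \<phi> (zs @ v' # u' # ws)" if "length zs = k" for zs u' v' ws
    using Suc.hyps(1) that by simp
  have t: "Frob \<phi> (L[j := a * L!j]) = Frob \<phi> (R[\<tau> j := a * R!(\<tau> j)])" if j: "j < length L" for j
  proof -
    consider "j < k" | "j = k" | "j = Suc k" | "j > Suc k" by linarith
    then show ?thesis
    proof cases
      case 1
      have "L[j := a * L!j] = xs0[j := a * xs0 ! j] @ u # v # ys"
        "R[\<tau> j := a * R!(\<tau> j)] = xs0[j := a * xs0 ! j] @ v # u # ys"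
        using 1 k by (simp_all add: L_def R_def \<tau>_def list_update_append nth_append)
      then show ?thesis using IH[of "xs0[j := a * xs0 ! j]" u v ys] k by simp
    next
      case 2
      have "L[j := a * L!j] = xs0 @ (a*u) # v # ys"
        "R[\<tau> j := a * R!(\<tau> j)] = xs0 @ v # (a*u) # ys"
        using 2 k by (simp_all add: L_def R_def \<tau>_def list_update_append nth_append)
      then show ?thesis using IH[of xs0 "a*u" v ys] k by simp
    next
      case 3
      have "L[j := a * L!j] = xs0 @ u # (a*v) # ys"
        "R[\<tau> j := a * R!(\<tau> j)] = xs0 @ (a*v) # u # ys"
        using 3 k by (simp_all add: L_def R_def \<tau>_def list_update_append nth_append)
      then show ?thesis using IH[of xs0 u "a*v" ys] k by simp
    next
      case 4
      define i where "i = j - Suc (Suc k)"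
      have i: "j = Suc (Suc k) + i" using 4 by (simp add: i_def)
      have "L[j := a * L!j] = xs0 @ u # v # ys[i := a * ys ! i]"
        "R[\<tau> j := a * R!(\<tau> j)] = xs0 @ v # u # ys[i := a * ys ! i]"
        using 4 i k by (simp_all add: L_def R_def \<tau>_def list_update_append nth_append)
      then show ?thesis using IH[of xs0 u v "ys[i := a * ys ! i]"] k by simp
    qed
  qed
  have "(\<Sum>j<length L. Frob \<phi> (L[j := a * L!j])) = (\<Sum>j<length R. Frob \<phi> (R[j := a * R!j]))"
  proof (rule sum.reindex_bij_witness[where i=\<tau> and j=\<tau>])
    show "\<And>x. x \<in> {..<length R} \<Longrightarrow> \<tau> (\<tau> x) = x" by (auto simp: \<tau>_def)
    show "\<And>x. x \<in> {..<length R} \<Longrightarrow> \<tau> x \<in> {..<length L}"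
      using lenR by (auto simp: \<tau>_def L_def k)
    show "\<And>x. x \<in> {..<length L} \<Longrightarrow> \<tau> (\<tau> x) = x" by (auto simp: \<tau>_def)
    show "\<And>x. x \<in> {..<length L} \<Longrightarrow> \<tau> x \<in> {..<length R}"
      using lenR by (auto simp: \<tau>_def L_def k)
    show "\<And>x. x \<in> {..<length L} \<Longrightarrow> Frob \<phi> (R[\<tau> x := a * R ! \<tau> x]) = Frob \<phi> (L[x := a * L ! x])"
      using t by simp
  qed
  moreover have "Frob \<phi> L = Frob \<phi> R" unfolding L_def R_def by (rule IH[OF k])
  ultimately show ?case
    unfolding xs append_Cons L_def[symmetric] R_def[symmetric] Frob.simps(2) lenR by simp
qed

lemma Frob_move:
  fixes \<phi> :: "'a::comm_ring_1 \<Rightarrow> 'b::comm_ring_1"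
  shows "Frob \<phi> (xs @ b # ys) = Frob \<phi> (b # xs @ ys)"
proof (induction xs arbitrary: ys rule: rev_induct)
  case Nil
  then show ?case by simp
next
  case (snoc x xs)
  have "Frob \<phi> ((xs @ [x]) @ b # ys) = Frob \<phi> (xs @ x # b # ys)" by simp
  also have "\<dots> = Frob \<phi> (xs @ b # x # ys)" by (rule Frob_swap)
  also have "\<dots> = Frob \<phi> (b # xs @ x # ys)" by (rule snoc.IH)
  finally show ?case by simp
qed

lemma Frob_upd:
  fixes \<phi> :: "'a::comm_ring_1 \<Rightarrow> 'b::comm_ring_1"
  assumes "j < length ys"
  shows "Frob \<phi> (ys[j := w]) = Frob \<phi> (w # take j ys @ drop (Suc j) ys)"
  using assms by (simp add: upd_conv_take_nth_drop Frob_move del: Frob.simps)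

lemma Frob_diff:
  fixes \<phi> :: "'a::comm_ring_1 \<Rightarrow> 'b::comm_ring_1"
  assumes lin: "\<And>u v. \<phi> (u - v) = \<phi> u - \<phi> v"
  shows "Frob \<phi> ((u - v) # ys) = Frob \<phi> (u # ys) - Frob \<phi> (v # ys)"
proof (induction "length ys" arbitrary: u v ys rule: less_induct)
  case less
  have t: "Frob \<phi> (ys[j := (u - v) * ys ! j]) = Frob \<phi> (ys[j := u * ys ! j]) - Frob \<phi> (ys[j := v * ys ! j])"
    if j: "j < length ys" for j
  proof -
    have "length (take j ys @ drop (Suc j) ys) < length ys" using j by simp
    note IH = less[OF this]
    show ?thesis using j IH[of "u * ys ! j" "v * ys ! j"]
      by (simp add: Frob_upd algebra_simps del: Frob.simps)
  qed
  have "(\<Sum>j<length ys. Frob \<phi> (ys[j := (u - v) * ys ! j])) =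
     (\<Sum>j<length ys. Frob \<phi> (ys[j := u * ys ! j])) - (\<Sum>j<length ys. Frob \<phi> (ys[j := v * ys ! j]))"
    using t by (simp add: sum_subtractf)
  then show ?case unfolding Frob.simps(2) lin by (simp add: algebra_simps)
qed

unbundle fps_syntax

lemma of_nat_mult_scaleR: "(of_nat m :: 'b::real_algebra_1) * (c *\<^sub>R y) = (real m * c) *\<^sub>R y"
proof -
  have "(of_nat m :: 'b) * (c *\<^sub>R y) = real m *\<^sub>R (c *\<^sub>R y)"
    by (simp add: scaleR_conv_of_real)
  then show ?thesis by simp
qed

lemma log_series_0: "log_series \<phi> x $ 0 = 0"
  by (simp add: log_series_def)

lemma log_series_deriv:
  fixes \<phi> :: "'a::{real_algebra_1,comm_ring_1} \<Rightarrow> 'b::{real_algebra_1,comm_ring_1}"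
  assumes lin: "linear \<phi>"
  shows "fps_deriv (log_series \<phi> x) $ i = (-1)^i * \<phi> (x ^ Suc i)"
proof -
  have "fps_deriv (log_series \<phi> x) $ i = of_nat (Suc i) * \<phi> (((-1) ^ (Suc i + 1) / real (Suc i)) *\<^sub>R x ^ Suc i)"
    by (simp add: log_series_def)
  also have "\<dots> = of_nat (Suc i) * (((-1) ^ (Suc i + 1) / real (Suc i)) *\<^sub>R \<phi> (x ^ Suc i))"
    using lin by (simp add: linear_scale)
  also have "\<dots> = (real (Suc i) * ((-1) ^ (Suc i + 1) / real (Suc i))) *\<^sub>R \<phi> (x ^ Suc i)"
    by (rule of_nat_mult_scaleR)
  also have "real (Suc i) * ((-1) ^ (Suc i + 1) / real (Suc i)) = (-1)^i"
    by simp
  finally show ?thesis by (simp add: scaleR_conv_of_real)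
qed

lemma psi_0: "psi \<phi> x 0 = 1"
  by (simp add: psi_def)

lemma power_nth_vanish:
  fixes f :: "'b::comm_ring_1 fps"
  assumes "f $ 0 = 0" "n < m"
  shows "(f ^ m) $ n = 0"
  using startsby_zero_power_prefix[OF assms(1)] assms(2) by blast

lemma psi_rec:
  fixes \<phi> :: "'a::{real_algebra_1,comm_ring_1} \<Rightarrow> 'b::{real_algebra_1,comm_ring_1}"
  assumes lin: "linear \<phi>"
  shows "of_nat (Suc k) * psi \<phi> x (Suc k) = (\<Sum>j\<le>k. (-1)^j * \<phi> (x ^ Suc j) * psi \<phi> x (k - j))"
proof -
  define L where "L = log_series \<phi> x"
  have L0: "L $ 0 = 0" by (simp add: L_def log_series_0)
  have "of_nat (Suc k) * psi \<phi> x (Suc k) =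
     (\<Sum>m\<le>Suc k. inverse (fact m) *\<^sub>R (fps_deriv (L ^ m) $ k))"
    unfolding psi_def L_def sum_distrib_left
    by (intro sum.cong refl) (simp only: mult_scaleR_right fps_deriv_nth Suc_eq_plus1)
  also have "\<dots> = (\<Sum>m\<le>k. inverse (fact (Suc m)) *\<^sub>R (fps_deriv (L ^ Suc m) $ k))"
    by (subst sum.atMost_Suc_shift) simp
  also have "\<dots> = (\<Sum>m\<le>k. inverse (fact m) *\<^sub>R ((fps_deriv L * L ^ m) $ k))"
  proof (intro sum.cong refl)
    fix m
    have "fps_deriv (L ^ Suc m) $ k = of_nat (Suc m) * ((fps_deriv L * L ^ m) $ k)"
      by (simp only: fps_deriv_power' diff_Suc_1 mult.assoc) (simp only: fps_of_nat[symmetric] fps_mult_left_const_nth)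
    then show "inverse (fact (Suc m)) *\<^sub>R (fps_deriv (L ^ Suc m) $ k) = inverse (fact m) *\<^sub>R ((fps_deriv L * L ^ m) $ k)"
    proof -
      have e: "real (Suc m) * inverse (fact (Suc m)) = inverse (fact m)"
        by (simp add: field_simps del: of_nat_Suc)
      show ?thesis unfolding \<open>fps_deriv (L ^ Suc m) $ k = _\<close> mult_scaleR_right[symmetric]
        of_nat_mult_scaleR e ..
    qed
  qed
  also have "\<dots> = (\<Sum>m\<le>k. \<Sum>i=0..k. fps_deriv L $ i * (inverse (fact m) *\<^sub>R (L ^ m) $ (k - i)))"
    by (simp add: fps_mult_nth scaleR_sum_right mult_scaleR_right)
  also have "\<dots> = (\<Sum>i=0..k. fps_deriv L $ i * (\<Sum>m\<le>k. inverse (fact m) *\<^sub>R (L ^ m) $ (k - i)))"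
    by (subst sum.swap) (simp add: sum_distrib_left)
  also have "\<dots> = (\<Sum>i=0..k. fps_deriv L $ i * psi \<phi> x (k - i))"
  proof (intro sum.cong refl arg_cong2[where f="(*)"])
    fix i assume "i \<in> {0..k}"
    have "(\<Sum>m\<le>k. inverse (fact m) *\<^sub>R (L ^ m) $ (k - i)) = (\<Sum>m\<le>k - i. inverse (fact m) *\<^sub>R (L ^ m) $ (k - i))"
      by (rule sum.mono_neutral_right) (auto simp: power_nth_vanish[OF L0])
    then show "(\<Sum>m\<le>k. inverse (fact m) *\<^sub>R (L ^ m) $ (k - i)) = psi \<phi> x (k - i)"
      by (simp add: psi_def L_def)
  qed
  finally show ?thesis
    by (simp only: L_def log_series_deriv[OF lin] atLeast0AtMost)
qed

lemma Frob_rep_upd: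
  fixes \<phi> :: "'a::comm_ring_1 \<Rightarrow> 'b::comm_ring_1"
  assumes "j < Suc k"
  shows "Frob \<phi> ((replicate (Suc k) x)[j := w]) = Frob \<phi> (w # replicate k x)"
proof -
  have "take j (replicate (Suc k) x) @ drop (Suc j) (replicate (Suc k) x) = replicate k x"
    using assms by (simp add: take_replicate drop_replicate replicate_add[symmetric] del: replicate_Suc)
  then show ?thesis using Frob_upd[of j "replicate (Suc k) x" \<phi> w] assms by simp
qed

lemma Frob_F_rec:
  fixes \<phi> :: "'a::comm_ring_1 \<Rightarrow> 'b::comm_ring_1"
  shows "Frob \<phi> (x^m # replicate (Suc k) x) = \<phi> (x^m) * Frob \<phi> (replicate (Suc k) x)
     - of_nat (Suc k) * Frob \<phi> (x^Suc m # replicate k x)"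
proof -
  have "(\<Sum>j<length (replicate (Suc k) x). Frob \<phi> ((replicate (Suc k) x)[j := x^m * (replicate (Suc k) x) ! j]))
      = (\<Sum>j<Suc k. Frob \<phi> (x^Suc m # replicate k x))"
    by (intro sum.cong refl) (simp_all add: Frob_rep_upd mult.commute del: replicate_Suc Frob.simps(2))
  then show ?thesis by (simp only: Frob.simps(2)) simp
qed

lemma Frob_psi:
  fixes \<phi> :: "'a::{real_algebra_1,comm_ring_1} \<Rightarrow> 'b::{real_algebra_1,comm_ring_1}"
  assumes lin: "linear \<phi>"
  shows "Frob \<phi> (replicate k x) = of_nat (fact k) * psi \<phi> x k"
proof -
  define G where "G m k = (\<Sum>j\<le>k. (-1)^j * \<phi> (x^(m+j)) * psi \<phi> x (k - j))" for m k
  have E: "Frob \<phi> (replicate (Suc k) x) = of_nat (fact (Suc k)) * psi \<phi> x (Suc k)"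
    if "Frob \<phi> (x^1 # replicate k x) = of_nat (fact k) * G 1 k" for k
  proof -
    have "Frob \<phi> (replicate (Suc k) x) = of_nat (fact k) * G 1 k" using that
      by (simp only: power_one_right replicate_Suc)
    also have "G 1 k = of_nat (Suc k) * psi \<phi> x (Suc k)"
      unfolding psi_rec[OF lin] G_def by simp
    finally show ?thesis by (simp add: algebra_simps)
  qed
  have F: "Frob \<phi> (x^m # replicate j x) = of_nat (fact j) * G m j" for m j
  proof (induction j arbitrary: m)
    case 0
    then show ?case by (simp add: G_def psi_0)
  next
    case (Suc k)
    note Suc = Suc
    have G: "G m (Suc k) = \<phi> (x^m) * psi \<phi> x (Suc k) - G (Suc m) k"
      unfolding G_def by (subst sum.atMost_Suc_shift) (simp add: sum_negf)
    show ?case unfolding Frob_F_rec E[OF Suc.IH] Suc.IH G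
      by (simp add: algebra_simps)
  qed
  show ?thesis
  proof (cases k)
    case 0
    then show ?thesis by (simp add: psi_0)
  next
    case (Suc k')
    then show ?thesis using E[OF F[of 1 k']] by (simp only:)
  qed
qed

lemma of_nat_cancel:
  fixes y z :: "'b::real_algebra_1"
  assumes "(of_nat m :: 'b) * y = of_nat m * z" "m \<noteq> 0"
  shows "y = z"
proof -
  have "real m *\<^sub>R y = real m *\<^sub>R z" using assms(1) by (simp add: scaleR_conv_of_real)
  then show ?thesis using assms(2) by simp
qed

theorem mainTheorem6:
  fixes \<phi> :: "'a::{real_algebra_1,comm_ring_1} \<Rightarrow> 'b::{real_algebra_1,comm_ring_1}"
    and n :: nat and a :: 'a
  assumes "n \<ge> 1" and "frobenius_hom n \<phi>"
  shows "psi \<phi> a n = 1 + (\<Sum>k=1..n. psi \<phi> (a - 1) k)"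
proof -
  have lin: "linear \<phi>" and phi1: "\<phi> 1 = of_nat n"
    and van: "\<And>as. length as \<ge> n + 1 \<Longrightarrow> Frob \<phi> as = 0"
    using assms(2) by (auto simp: frobenius_hom_def)
  have lind: "\<phi> (u - v) = \<phi> u - \<phi> v" for u v using lin by (rule linear_diff)
  define M where "M k j = Frob \<phi> (replicate k (a - 1) @ replicate j a)" for k j
  have MV: "M k j = 0" if "k + j > n" for k j
    unfolding M_def using that by (intro van) simp
  have M0j: "M 0 j = of_nat (fact j) * psi \<phi> a j" for j
    unfolding M_def using Frob_psi[OF lin] by simp
  have Mk0: "M k 0 = of_nat (fact k) * psi \<phi> (a - 1) k" for k
    unfolding M_def using Frob_psi[OF lin] by simp
  have MR: "M (Suc k) j = M k (Suc j) - (of_nat n - of_nat (k + j)) * M k j" for k j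
  proof -
    define R where "R = replicate k (a - 1) @ replicate j a"
    have "M (Suc k) j = Frob \<phi> ((a - 1) # R)" by (simp add: M_def R_def del: Frob.simps)
    also have "\<dots> = Frob \<phi> (a # R) - Frob \<phi> (1 # R)" by (rule Frob_diff[OF lind])
    also have "Frob \<phi> (a # R) = M k (Suc j)"
      unfolding M_def R_def Frob_move[symmetric] by simp
    also have "Frob \<phi> (1 # R) = (of_nat n - of_nat (k + j)) * M k j"
      by (simp add: R_def M_def phi1 algebra_simps)
    finally show ?thesis .
  qed
  define U where "U j = (\<Sum>k\<le>n. inverse (fact k) *\<^sub>R M k j)" for j
  have UR: "U (Suc j) = (of_nat n - of_nat j) * U j" for j
  proof -
    define f where "f k = (real k * inverse (fact k)) *\<^sub>R M k j" for k
    define W where "W = (\<Sum>k\<le>n. f k)"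
    have "(\<Sum>k\<le>n. inverse (fact k) *\<^sub>R M (Suc k) j) = (\<Sum>k\<le>n. f (Suc k))"
    proof (intro sum.cong refl)
      fix k
      have "real (Suc k) * inverse (fact (Suc k)) = inverse (fact k)"
        by (simp add: field_simps del: of_nat_Suc)
      then show "inverse (fact k) *\<^sub>R M (Suc k) j = f (Suc k)" by (simp only: f_def)
    qed
    also have "\<dots> = W"
    proof -
      have "(\<Sum>k\<le>Suc n. f k) = f 0 + (\<Sum>k\<le>n. f (Suc k))" by (rule sum.atMost_Suc_shift)
      moreover have "(\<Sum>k\<le>Suc n. f k) = W + f (Suc n)" by (simp add: W_def)
      moreover have "f 0 = 0" by (simp add: f_def)
      moreover have "f (Suc n) = 0" by (simp add: f_def MV)
      ultimately show ?thesis by simp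
    qed
    finally have L: "(\<Sum>k\<le>n. inverse (fact k) *\<^sub>R M (Suc k) j) = W" .
    have "(\<Sum>k\<le>n. inverse (fact k) *\<^sub>R M (Suc k) j) =
        (\<Sum>k\<le>n. inverse (fact k) *\<^sub>R M k (Suc j) - ((of_nat n - of_nat j) * (inverse (fact k) *\<^sub>R M k j) - f k))"
    proof (intro sum.cong refl)
      fix k
      have "inverse (fact k) *\<^sub>R (of_nat k * M k j) = f k"
        unfolding f_def mult_scaleR_right[symmetric] of_nat_mult_scaleR by (simp add: mult.commute)
      then show "inverse (fact k) *\<^sub>R M (Suc k) j = inverse (fact k) *\<^sub>R M k (Suc j) - ((of_nat n - of_nat j) * (inverse (fact k) *\<^sub>R M k j) - f k)"
        unfolding MR by (simp add: algebra_simps mult_scaleR_right)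
    qed
    also have "\<dots> = U (Suc j) - ((of_nat n - of_nat j) * U j - W)"
      by (simp add: U_def W_def sum_subtractf sum_distrib_left)
    finally show ?thesis using L by simp
  qed
  have UF: "of_nat (fact (n - j)) * U j = of_nat (fact n) * U 0" if "j \<le> n" for j
    using that
  proof (induction j)
    case 0
    then show ?case by simp
  next
    case (Suc j)
    have nj: "n - j = Suc (n - Suc j)" using Suc.prems by simp
    have "of_nat (fact (n - Suc j)) * U (Suc j) = of_nat (fact (n - Suc j)) * (of_nat (n - j) * U j)"
      unfolding UR using Suc.prems by (simp add: of_nat_diff)
    also have "\<dots> = of_nat (fact (n - j)) * U j"
      unfolding nj fact_Suc of_nat_mult of_nat_id by (simp only: mult_ac)
    also have "\<dots> = of_nat (fact n) * U 0" using Suc by simp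
    finally show ?case .
  qed
  have Un: "U n = of_nat (fact n) * psi \<phi> a n"
  proof -
    have "U n = (\<Sum>k\<in>{0}. inverse (fact k) *\<^sub>R M k n)"
      unfolding U_def by (rule sum.mono_neutral_right) (auto simp: MV)
    then show ?thesis by (simp add: M0j)
  qed
  have U0: "U 0 = (\<Sum>k\<le>n. psi \<phi> (a - 1) k)"
    unfolding U_def Mk0
    by (intro sum.cong refl) (simp only: mult_scaleR_right[symmetric] of_nat_mult_scaleR, simp)
  have "of_nat (fact n) * psi \<phi> a n = of_nat (fact n) * (\<Sum>k\<le>n. psi \<phi> (a - 1) k)"
    using UF[of n] Un U0 by simp
  then have "psi \<phi> a n = (\<Sum>k\<le>n. psi \<phi> (a - 1) k)"
    by (rule of_nat_cancel) simp
  also have "\<dots> = 1 + (\<Sum>k=1..n. psi \<phi> (a - 1) k)"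
    by (simp add: atMost_atLeast0 sum.atLeast_Suc_atMost psi_0)
  finally show ?thesis .
qed

end
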